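(* Let $B\in\mathbb{R}^{n\times n}$ be symmetric, partitioned into $p\times p$ blocks $B_{st}\in\mathbb{R}^{n_s\times n_t}$, and let $\hat B$ be its strictly block upper triangular part ($\hat B_{st}=B_{st}$ if $s<t$, $0$ otherwise). If $\lambda_{\max}(B)>0$, then for every $\beta\in(0,\frac1{\rho(B)})$ there is at least one nonzero eigenvalue $\lambda$ of $\beta(I_n+\beta\hat B)^{-1}B$ such that $$\frac1\lambda\in\Xi(\beta,B)=\left\{a+bi:\ a,b\in\mathbb{R},\ a\ge\frac12+\frac{1-\beta\rho(B)}{\beta\rho(B)}\right\}.$$
   Context: $n_1,\dots,n_p$ are positive integers with $\sum_sn_s=n$; $\rho(B)$ denotes the spectral radius of $B$ and $\lambda_{\max}(B)$ its largest eigenvalue. *)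

theory Defs
  imports "Jordan_Normal_Form.Spectral_Radius"
begin

text \<open>Block index of row/column i for a partition with block sizes ns = [n_1,...,n_p]
  (0-based): the unique s with n_1+...+n_s \<le> i < n_1+...+n_(s+1).\<close>
definition block_idx :: "nat list \<Rightarrow> nat \<Rightarrow> nat" where
  "block_idx ns i = (LEAST s. i < sum_list (take (Suc s) ns))"

definition strict_block_upper :: "nat list \<Rightarrow> 'a::zero mat \<Rightarrow> 'a mat" where
  "strict_block_upper ns B = mat (dim_row B) (dim_col B)
     (\<lambda>(i,j). if block_idx ns i < block_idx ns j then B $$ (i,j) else 0)"

text \<open>Matrix inverse of a square matrix (meaningful when it is invertible).\<close>
definition inv_mat :: "'a::field mat \<Rightarrow> 'a mat" where
  "inv_mat A = (SOME X. X \<in> carrier_mat (dim_row A) (dim_row A) \<and>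
                 A * X = 1\<^sub>m (dim_row A) \<and> X * A = 1\<^sub>m (dim_row A))"

definition lambda_max :: "real mat \<Rightarrow> real" where
  "lambda_max B = Max {x. eigenvalue B x}"

definition rho :: "real mat \<Rightarrow> real" where
  "rho B = spectral_radius (map_mat complex_of_real B)"

end

theory Submission
  imports Defs
begin


definition qf :: "nat \<Rightarrow> (nat \<Rightarrow> nat \<Rightarrow> complex) \<Rightarrow> (nat \<Rightarrow> complex) \<Rightarrow> complex" where
  "qf k A y = (\<Sum>i<k. \<Sum>j<k. cnj (y i) * A i j * y j)"

definition mv :: "nat \<Rightarrow> (nat \<Rightarrow> nat \<Rightarrow> complex) \<Rightarrow> (nat \<Rightarrow> complex) \<Rightarrow> nat \<Rightarrow> complex" where
  "mv k A y i = (\<Sum>j<k. A i j * y j)"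

definition nz :: "nat \<Rightarrow> (nat \<Rightarrow> complex) \<Rightarrow> bool" where
  "nz k y = (\<exists>i<k. y i \<noteq> 0)"

definition ins :: "nat \<Rightarrow> nat \<Rightarrow> nat" where
  "ins p i = (if i < p then i else Suc i)"

lemma qf_mv: "qf k A y = (\<Sum>i<k. cnj (y i) * mv k A y i)"
  unfolding qf_def mv_def by (simp add: sum_distrib_left mult.assoc)

lemma ins_neq: "ins p i \<noteq> p" unfolding ins_def by auto

lemma ins_less: "i < m \<Longrightarrow> ins p i < Suc m" unfolding ins_def by auto

lemma ins_inj: "inj (ins p)" unfolding inj_def ins_def by auto

lemma ins_surj: "i < Suc m \<Longrightarrow> i \<noteq> p \<Longrightarrow> p < Suc m \<Longrightarrow> \<exists>i'<m. i = ins p i'"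
proof (cases "i < p")
  case True
  assume "i < Suc m" "i \<noteq> p" "p < Suc m"
  then show ?thesis using True by (intro exI[of _ i]) (auto simp: ins_def)
next
  case False
  assume "i < Suc m" "i \<noteq> p" "p < Suc m"
  then show ?thesis using False by (intro exI[of _ "i - 1"]) (auto simp: ins_def)
qed

lemma sum_split:
  assumes p: "p < Suc m"
  shows "(\<Sum>i<Suc m. f i) = f p + (\<Sum>i<m. f (ins p i))"
proof -
  have img: "{..<Suc m} = insert p (ins p ` {..<m})"
  proof
    show "{..<Suc m} \<subseteq> insert p (ins p ` {..<m})"
      using ins_surj[OF _ _ p] by fastforce
    show "insert p (ins p ` {..<m}) \<subseteq> {..<Suc m}" using p ins_less by auto
  qed
  have "p \<notin> ins p ` {..<m}" by (metis imageE ins_neq)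
  then have "(\<Sum>i<Suc m. f i) = f p + sum f (ins p ` {..<m})"
    unfolding img by simp
  also have "sum f (ins p ` {..<m}) = (\<Sum>i<m. f (ins p i))"
  proof -
    have inj: "inj_on (ins p) {..<m}" by (meson ins_inj inj_on_subset subset_UNIV)
    show ?thesis using sum.reindex[OF inj, of f] by (simp add: comp_def)
  qed
  finally show ?thesis .
qed

lemma herm_qf_real:
  assumes herm: "\<forall>i<k. \<forall>j<k. B i j = cnj (B j i)"
  shows "Im (qf k B y) = 0"
proof -
  have "cnj (qf k B y) = (\<Sum>i<k. \<Sum>j<k. y i * cnj (B i j) * cnj (y j))"
    unfolding qf_def by (simp add: mult.assoc)
  also have "\<dots> = (\<Sum>i<k. \<Sum>j<k. cnj (y j) * B j i * y i)"
  proof -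
    have h: "\<forall>i<k. \<forall>j<k. cnj (B i j) = B j i" using herm by (metis complex_cnj_cnj)
    show ?thesis using h by (intro sum.cong refl) (simp add: mult_ac)
  qed
  also have "\<dots> = qf k B y" unfolding qf_def by (rule sum.swap)
  finally have "cnj (qf k B y) = qf k B y" .
  then show ?thesis by (simp add: complex_eq_iff)
qed

lemma inv_exists:
  assumes A: "(A :: 'a :: field mat) \<in> carrier_mat n n" and d: "det A \<noteq> 0"
  shows "\<exists>X \<in> carrier_mat n n. A * X = 1\<^sub>m n \<and> X * A = 1\<^sub>m n"
  using det_non_zero_imp_unit[OF A d, of "()"] unfolding Units_def ring_mat_def by auto

lemma mv_vec: "v \<in> carrier_vec k \<Longrightarrow> i < k \<Longrightarrow>
   (mat k k (\<lambda>(i,j). A i j) *\<^sub>v v) $ i = mv k A (\<lambda>j. v $ j) i"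
  unfolding mv_def by (simp add: scalar_prod_def atLeast0LessThan row_def)

lemma pencil_eig:
  assumes k: "k > 0"
  and posA: "\<forall>y. nz k y \<longrightarrow> Re (qf k A y) > 0"
  shows "\<exists>l x. nz k x \<and> (\<forall>i<k. mv k B x i = l * mv k A x i)"
proof -
  define Am where "Am = mat k k (\<lambda>(i,j). A i j)"
  define Bm where "Bm = mat k k (\<lambda>(i,j). B i j)"
  have Am: "Am \<in> carrier_mat k k" and Bm: "Bm \<in> carrier_mat k k" unfolding Am_def Bm_def by auto
  have "det Am \<noteq> 0"
  proof
    assume "det Am = 0"
    then obtain v where v: "v \<in> carrier_vec k" "v \<noteq> 0\<^sub>v k" "Am *\<^sub>v v = 0\<^sub>v k"
      using det_0_iff_vec_prod_zero[OF Am] by auto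
    have "nz k (\<lambda>j. v $ j)" using v(1,2) unfolding nz_def by (auto simp: vec_eq_iff)
    then have "Re (qf k A (\<lambda>j. v $ j)) > 0" using posA by auto
    moreover have "\<And>i. i < k \<Longrightarrow> mv k A (\<lambda>j. v $ j) i = 0"
      using mv_vec[OF v(1), of _ A] v(3) unfolding Am_def by (metis index_zero_vec(1))
    then have "qf k A (\<lambda>j. v $ j) = 0" unfolding qf_mv by simp
    ultimately show False by simp
  qed
  from inv_exists[OF Am this] obtain X where X: "X \<in> carrier_mat k k" "Am * X = 1\<^sub>m k" by auto
  have XB: "X * Bm \<in> carrier_mat k k" using X Bm by auto
  from spectrum_non_empty[OF XB k] obtain l where "eigenvalue (X * Bm) l"
    unfolding spectrum_def by auto
  then obtain x where x: "x \<in> carrier_vec k" "x \<noteq> 0\<^sub>v k" "(X * Bm) *\<^sub>v x = l \<cdot>\<^sub>v x"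
    unfolding eigenvalue_def eigenvector_def using XB by auto
  have "Am * X * Bm = Bm" using X(2) Bm by (simp add: left_mult_one_mat)
  then have "Bm *\<^sub>v x = (Am * (X * Bm)) *\<^sub>v x" using assoc_mult_mat[OF Am X(1) Bm] by simp
  also have "\<dots> = Am *\<^sub>v ((X * Bm) *\<^sub>v x)"
    by (rule assoc_mult_mat_vec[OF Am XB x(1)])
  also have "\<dots> = l \<cdot>\<^sub>v (Am *\<^sub>v x)" using x(3) mult_mat_vec[OF Am x(1)] by simp
  finally have eq: "Bm *\<^sub>v x = l \<cdot>\<^sub>v (Am *\<^sub>v x)" .
  show ?thesis
  proof (intro exI conjI allI impI)
    show "nz k (\<lambda>j. x $ j)" using x(1,2) unfolding nz_def by (auto simp: vec_eq_iff)
    fix i assume i: "i < k"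
    have "(Bm *\<^sub>v x) $ i = (l \<cdot>\<^sub>v (Am *\<^sub>v x)) $ i" using eq by simp
    moreover have "mv k B (\<lambda>j. x $ j) i = (Bm *\<^sub>v x) $ i"
      using mv_vec[OF x(1) i, of B] unfolding Bm_def by simp
    moreover have "mv k A (\<lambda>j. x $ j) i = (Am *\<^sub>v x) $ i"
      using mv_vec[OF x(1) i, of A] unfolding Am_def by simp
    moreover have "(l \<cdot>\<^sub>v (Am *\<^sub>v x)) $ i = l * (Am *\<^sub>v x) $ i" using i Am by simp
    ultimately show "mv k B (\<lambda>j. x $ j) i = l * mv k A (\<lambda>j. x $ j) i" by metis
  qed
qed

definition herm :: "nat \<Rightarrow> (nat \<Rightarrow> nat \<Rightarrow> complex) \<Rightarrow> bool" where
  "herm k B = (\<forall>i<k. \<forall>j<k. B i j = cnj (B j i))"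

definition cong :: "nat \<Rightarrow> (nat \<Rightarrow> nat \<Rightarrow> complex) \<Rightarrow> (nat \<Rightarrow> nat \<Rightarrow> complex) \<Rightarrow> nat \<Rightarrow> nat \<Rightarrow> complex" where
  "cong k Q X i j = (\<Sum>a<k. \<Sum>b<k. cnj (Q a i) * X a b * Q b j)"

definition adj :: "nat \<Rightarrow> (nat \<Rightarrow> nat \<Rightarrow> complex) \<Rightarrow> (nat \<Rightarrow> complex) \<Rightarrow> nat \<Rightarrow> complex" where
  "adj k Q z i = (\<Sum>a<k. cnj (Q a i) * z a)"

definition ext :: "nat \<Rightarrow> (nat \<Rightarrow> complex) \<Rightarrow> complex \<Rightarrow> nat \<Rightarrow> complex" where
  "ext p z t i = (if i = p then t else if i < p then z i else z (i - 1))"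

lemma ext_ins[simp]: "ext p z t (ins p i) = z i" unfolding ext_def ins_def by auto
lemma ext_p[simp]: "ext p z t p = t" unfolding ext_def by auto

lemma qf_cong_vals: "(\<And>i. i < k \<Longrightarrow> y i = y' i) \<Longrightarrow> qf k X y = qf k X y'"
  unfolding qf_def by (intro sum.cong refl) auto

lemma mv_cong_vals: "(\<And>i. i < k \<Longrightarrow> y i = y' i) \<Longrightarrow> mv k X y j = mv k X y' j"
  unfolding mv_def by (intro sum.cong refl) auto

lemma adj_cong_vals: "(\<And>i. i < k \<Longrightarrow> y i = y' i) \<Longrightarrow> adj k X y j = adj k X y' j"
  unfolding adj_def by (intro sum.cong refl) auto

lemma cong_mv: "mv k (cong k Q X) u i = adj k Q (mv k X (mv k Q u)) i"
proof -
  have "mv k (cong k Q X) u i = (\<Sum>j<k. \<Sum>a<k. \<Sum>b<k. cnj (Q a i) * X a b * Q b j * u j)"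
    by (simp add: mv_def cong_def sum_distrib_right)
  also have "\<dots> = (\<Sum>a<k. \<Sum>j<k. \<Sum>b<k. cnj (Q a i) * X a b * Q b j * u j)"
    by (rule sum.swap)
  also have "\<dots> = (\<Sum>a<k. \<Sum>b<k. \<Sum>j<k. cnj (Q a i) * X a b * Q b j * u j)"
    by (rule sum.cong[OF refl], rule sum.swap)
  also have "\<dots> = adj k Q (mv k X (mv k Q u)) i"
    by (simp add: adj_def mv_def sum_distrib_left mult_ac)
  finally show ?thesis .
qed

lemma cong_qf: "qf k (cong k Q X) u = qf k X (mv k Q u)"
proof -
  have "qf k (cong k Q X) u = (\<Sum>i<k. \<Sum>a<k. cnj (u i) * cnj (Q a i) * mv k X (mv k Q u) a)"
    unfolding qf_mv cong_mv adj_def by (simp add: sum_distrib_left mult_ac)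
  also have "\<dots> = (\<Sum>a<k. \<Sum>i<k. cnj (u i) * cnj (Q a i) * mv k X (mv k Q u) a)"
    by (rule sum.swap)
  also have "\<dots> = qf k X (mv k Q u)"
    unfolding qf_mv by (simp add: mv_def sum_distrib_right mult_ac)
  finally show ?thesis .
qed

lemma cong_herm: assumes "herm k B" shows "herm k (cong k Q B)"
  unfolding herm_def
proof (intro allI impI)
  fix i j assume ij: "i < k" "j < k"
  have h: "\<forall>i<k. \<forall>j<k. cnj (B i j) = B j i" using assms unfolding herm_def by (metis complex_cnj_cnj)
  have "cnj (cong k Q B j i) = (\<Sum>a<k. \<Sum>b<k. Q a j * B b a * cnj (Q b i))"
    unfolding cong_def using h by (simp add: mult_ac)
  also have "\<dots> = (\<Sum>b<k. \<Sum>a<k. Q a j * B b a * cnj (Q b i))" by (rule sum.swap)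
  also have "\<dots> = cong k Q B i j" unfolding cong_def by (simp add: mult_ac)
  finally show "cong k Q B i j = cnj (cong k Q B j i)" by simp
qed

lemma qf_split:
  assumes p: "p < Suc m"
  shows "qf (Suc m) X u = cnj (u p) * X p p * u p
    + (\<Sum>j<m. cnj (u p) * X p (ins p j) * u (ins p j))
    + (\<Sum>i<m. cnj (u (ins p i)) * X (ins p i) p * u p)
    + qf m (\<lambda>i j. X (ins p i) (ins p j)) (\<lambda>i. u (ins p i))"
  unfolding qf_def sum_split[OF p] sum.distrib by (simp add: add_ac)

lemma mv_split:
  assumes p: "p < Suc m"
  shows "mv (Suc m) X u i = X i p * u p + (\<Sum>j<m. X i (ins p j) * u (ins p j))"
  unfolding mv_def sum_split[OF p] ..

definition Qm :: "nat \<Rightarrow> (nat \<Rightarrow> complex) \<Rightarrow> (nat \<Rightarrow> complex) \<Rightarrow> nat \<Rightarrow> nat \<Rightarrow> complex" where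
  "Qm p x c i j = (if j = p then x i else (if i = j then 1 else 0) - c j * x i)"

lemma Q_mv:
  assumes i: "i < k" and p: "p < k"
  shows "mv k (Qm p x c) u i = x i * (u p - (\<Sum>j<k. if j = p then 0 else c j * u j)) + (if i = p then 0 else u i)"
proof -
  have "mv k (Qm p x c) u i = (\<Sum>j<k. x i * ((if j = p then u j else 0) - (if j = p then 0 else c j * u j))
        + (if j = i then (if i = p then 0 else u i) else 0))"
    unfolding mv_def Qm_def by (intro sum.cong refl) (auto simp: algebra_simps)
  also have "\<dots> = x i * ((\<Sum>j<k. (if j = p then u j else 0)) - (\<Sum>j<k. if j = p then 0 else c j * u j))
        + (\<Sum>j<k. if j = i then (if i = p then 0 else u i) else 0)"
    unfolding sum.distrib sum_distrib_left[symmetric] sum_subtractf ..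
  also have "\<dots> = x i * (u p - (\<Sum>j<k. if j = p then 0 else c j * u j)) + (if i = p then 0 else u i)"
    using i p by simp
  finally show ?thesis .
qed

lemma Q_inj:
  assumes p: "p < k" and xp: "x p \<noteq> 0" and u: "nz k u"
  shows "nz k (mv k (Qm p x c) u)"
proof (rule ccontr)
  assume "\<not> nz k (mv k (Qm p x c) u)"
  then have z: "\<And>i. i < k \<Longrightarrow> mv k (Qm p x c) u i = 0" unfolding nz_def by auto
  define al where "al = u p - (\<Sum>j<k. if j = p then 0 else c j * u j)"
  have "x p * al = 0" using z[OF p] Q_mv[OF p p, of x c u] unfolding al_def by simp
  then have al: "al = 0" using xp by simp
  have u0: "\<And>i. i < k \<Longrightarrow> i \<noteq> p \<Longrightarrow> u i = 0"
    using z Q_mv[OF _ p, of _ x c u] al unfolding al_def by fastforce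
  have "(\<Sum>j<k. if j = p then 0 else c j * u j) = 0"
    by (intro sum.neutral) (auto simp: u0)
  then have "u p = 0" using al unfolding al_def by simp
  then have "\<forall>i<k. u i = 0" using u0 by metis
  then show False using u unfolding nz_def by auto
qed

lemma Q_surj:
  assumes p: "p < k" and xp: "x p \<noteq> 0"
  shows "\<exists>u. \<forall>i<k. mv k (Qm p x c) u i = v i"
proof -
  define a0 where "a0 = v p / x p"
  define u where "u j = (if j = p then a0 + (\<Sum>j'<k. if j' = p then 0 else c j' * (v j' - a0 * x j'))
     else v j - a0 * x j)" for j
  have s: "(\<Sum>j<k. if j = p then 0 else c j * u j) = (\<Sum>j'<k. if j' = p then 0 else c j' * (v j' - a0 * x j'))"
    by (intro sum.cong refl) (auto simp: u_def)
  have al: "u p - (\<Sum>j<k. if j = p then 0 else c j * u j) = a0" unfolding s by (simp add: u_def)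
  show ?thesis
  proof (intro exI allI impI)
    fix i assume i: "i < k"
    show "mv k (Qm p x c) u i = v i"
      unfolding Q_mv[OF i p] al using xp by (auto simp: u_def a0_def)
  qed
qed

lemma adj_Q:
  assumes j: "j < k" and p: "p < k"
  shows "adj k (Qm p x c) z j = (if j = p then (\<Sum>a<k. cnj (x a) * z a)
     else z j - cnj (c j) * (\<Sum>a<k. cnj (x a) * z a))"
proof (cases "j = p")
  case True then show ?thesis by (simp add: adj_def Qm_def)
next
  case False
  have "adj k (Qm p x c) z j = (\<Sum>a<k. (if a = j then z a else 0) - cnj (c j) * (cnj (x a) * z a))"
    unfolding adj_def Qm_def using False by (intro sum.cong refl) (auto simp: algebra_simps)
  also have "\<dots> = z j - cnj (c j) * (\<Sum>a<k. cnj (x a) * z a)"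
    using j by (simp add: sum_subtractf sum_distrib_left)
  finally show ?thesis using False by simp
qed

lemma adj_inj:
  assumes p: "p < k" and xp: "x p \<noteq> 0" and z: "\<And>j. j < k \<Longrightarrow> adj k (Qm p x c) z j = 0"
  shows "\<forall>a<k. z a = 0"
proof -
  define s where "s = (\<Sum>a<k. cnj (x a) * z a)"
  have s0: "s = 0" using z[OF p] adj_Q[OF p p, of x c z] unfolding s_def by simp
  have zj: "\<And>j. j < k \<Longrightarrow> j \<noteq> p \<Longrightarrow> z j = 0"
    using z adj_Q[OF _ p, of _ x c z] s0 unfolding s_def by fastforce
  have "s = cnj (x p) * z p" unfolding s_def
    by (subst sum.remove[OF _ , of _ p]) (use p zj in auto)
  then have "z p = 0" using s0 xp by simp
  then show ?thesis using zj by metis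
qed

lemma adj_scale: "adj k Q (\<lambda>j. l * z j) i = l * adj k Q z i"
  unfolding adj_def sum_distrib_left by (simp add: mult_ac)

lemma cong_col: "cong k (Qm p x c) X i p = adj k (Qm p x c) (mv k X x) i"
  unfolding cong_def adj_def mv_def sum_distrib_left by (intro sum.cong refl) (simp add: Qm_def mult_ac)

lemma re_nonpos:
  fixes l a b :: complex
  assumes b: "b = l * a" and Ib: "Im b = 0" and Rl: "Re l \<le> 0" and Ra: "Re a > 0"
  shows "Re b \<le> 0"
proof -
  have i: "Re l * Im a + Im l * Re a = 0" using b Ib by simp
  have r: "Re b = Re l * Re a - Im l * Im a" using b by simp
  have "Re b * Re a = Re l * (Re a * Re a) - (Im l * Re a) * Im a" unfolding r by (simp add: algebra_simps)
  also have "Im l * Re a = - (Re l * Im a)" using i by (simp add: algebra_simps)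
  finally have "Re b * Re a = Re l * (Re a * Re a + Im a * Im a)" by (simp add: algebra_simps)
  moreover have "Re l * (Re a * Re a + Im a * Im a) \<le> 0"
    using Rl by (intro mult_nonpos_nonneg) auto
  ultimately have "Re b * Re a \<le> 0" by simp
  then show ?thesis using Ra by (simp add: mult_le_0_iff)
qed

lemma pencil:
  assumes "herm k B" and "\<forall>y. nz k y \<longrightarrow> Re (qf k A y) > 0" and "Re (qf k B v) > 0"
  shows "\<exists>\<mu> y. Re \<mu> > 0 \<and> nz k y \<and> (\<forall>i<k. mv k B y i = \<mu> * mv k A y i)"
  using assms
proof (induction k arbitrary: A B v)
  case 0
  then show ?case by (simp add: qf_def)
next
  case (Suc m)
  note hermB = Suc.prems(1) and posA = Suc.prems(2) and posB = Suc.prems(3)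
  obtain l x where x: "nz (Suc m) x" and eig: "\<And>i. i < Suc m \<Longrightarrow> mv (Suc m) B x i = l * mv (Suc m) A x i"
    using pencil_eig[of "Suc m" A B] posA by auto
  show ?case
  proof (cases "Re l > 0")
    case True
    then show ?thesis using x eig by blast
  next
    case False
    define w where "w = mv (Suc m) A x"
    define a where "a = qf (Suc m) A x"
    define b where "b = qf (Suc m) B x"
    have Ra: "Re a > 0" using posA x unfolding a_def by auto
    then have a0: "a \<noteq> 0" by auto
    have bla: "b = l * a"
    proof -
      have "b = (\<Sum>i<Suc m. l * (cnj (x i) * mv (Suc m) A x i))"
        unfolding b_def qf_mv by (intro sum.cong refl) (simp add: eig mult_ac)
      then show ?thesis unfolding a_def qf_mv by (simp only: sum_distrib_left)
    qed
    have Ib: "Im b = 0" using herm_qf_real hermB unfolding b_def herm_def by blast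
    have Rb: "Re b \<le> 0" using re_nonpos[OF bla Ib _ Ra] False by simp
    obtain p where p: "p < Suc m" and xp: "x p \<noteq> 0" using x unfolding nz_def by auto
    define c where "c j = cnj (w j / a)" for j
    define Q where "Q = Qm p x c"
    define A' where "A' = cong (Suc m) Q A"
    define B' where "B' = cong (Suc m) Q B"
    define A2 where "A2 i j = A' (ins p i) (ins p j)" for i j
    define B2 where "B2 i j = B' (ins p i) (ins p j)" for i j
    have sxw: "(\<Sum>a<Suc m. cnj (x a) * w a) = a" unfolding a_def w_def qf_mv ..
    have A'col: "A' i p = 0" if "i < Suc m" "i \<noteq> p" for i
    proof -
      have "A' i p = w i - cnj (c i) * a"
        unfolding A'_def Q_def cong_col adj_Q[OF that(1) p] w_def[symmetric] sxw using that by simp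
      also have "\<dots> = 0" using a0 by (simp add: c_def)
      finally show ?thesis .
    qed
    have B'col: "B' i p = 0" if "i < Suc m" "i \<noteq> p" for i
    proof -
      have "B' i p = adj (Suc m) Q (\<lambda>j. l * w j) i"
        unfolding B'_def Q_def cong_col by (rule adj_cong_vals) (simp add: eig w_def)
      also have "\<dots> = l * A' i p" unfolding A'_def Q_def cong_col adj_scale w_def ..
      finally show ?thesis using A'col[OF that] by simp
    qed
    have hermB': "herm (Suc m) B'" unfolding B'_def by (rule cong_herm[OF hermB])
    have B'row: "B' p j = 0" if "j < Suc m" "j \<noteq> p" for j
    proof -
      have "B' p j = cnj (B' j p)" using hermB' that p unfolding herm_def by blast
      then show ?thesis using B'col[OF that] by simp
    qed
    have B'pp: "B' p p = b" unfolding B'_def Q_def cong_col adj_Q[OF p p] b_def qf_mv by simp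
    have A'pp: "A' p p = a" unfolding A'_def Q_def cong_col adj_Q[OF p p] a_def qf_mv by simp
    have hermB2: "herm m B2" unfolding herm_def B2_def
    proof (intro allI impI)
      fix i j assume ij: "i < m" "j < m"
      show "B' (ins p i) (ins p j) = cnj (B' (ins p j) (ins p i))"
        by (rule hermB'[unfolded herm_def, rule_format]) (simp_all add: ins_less ij)
    qed
    have posA2: "\<forall>z. nz m z \<longrightarrow> Re (qf m A2 z) > 0"
    proof (intro allI impI)
      fix z assume z: "nz m z"
      define u where "u = ext p z 0"
      have nu: "nz (Suc m) u"
      proof -
        obtain i where "i < m" "z i \<noteq> 0" using z unfolding nz_def by blast
        then show ?thesis unfolding nz_def u_def by (intro exI[of _ "ins p i"]) (simp add: ins_less)
      qed
      have "qf (Suc m) A' u = qf m A2 z"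
        unfolding qf_split[OF p] u_def A2_def by simp
      moreover have "qf (Suc m) A' u = qf (Suc m) A (mv (Suc m) Q u)"
        unfolding A'_def by (rule cong_qf)
      moreover have "nz (Suc m) (mv (Suc m) Q u)" unfolding Q_def by (rule Q_inj[where x=x, OF p xp nu])
      ultimately show "Re (qf m A2 z) > 0" using posA by auto
    qed
    obtain u0 where u0: "\<forall>i<Suc m. mv (Suc m) Q u0 i = v i" using Q_surj[where x=x, OF p xp] unfolding Q_def by blast
    have "qf (Suc m) B' u0 = qf (Suc m) B v"
      unfolding B'_def cong_qf by (rule qf_cong_vals) (use u0 in auto)
    also have "qf (Suc m) B' u0 = cnj (u0 p) * b * u0 p + qf m B2 (\<lambda>i. u0 (ins p i))"
      unfolding qf_split[OF p] B2_def B'pp using B'row B'col ins_less ins_neq by simp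
    finally have eqB: "cnj (u0 p) * b * u0 p + qf m B2 (\<lambda>i. u0 (ins p i)) = qf (Suc m) B v" .
    have "Re (cnj (u0 p) * b * u0 p) = Re b * ((Re (u0 p))^2 + (Im (u0 p))^2)"
      using Ib by (simp add: algebra_simps power2_eq_square)
    also have "\<dots> \<le> 0" using Rb by (intro mult_nonpos_nonneg) auto
    finally have le0: "Re (cnj (u0 p) * b * u0 p) \<le> 0" .
    have "Re (cnj (u0 p) * b * u0 p) + Re (qf m B2 (\<lambda>i. u0 (ins p i))) = Re (qf (Suc m) B v)"
      using arg_cong[OF eqB, of Re] by simp
    then have posB2: "Re (qf m B2 (\<lambda>i. u0 (ins p i))) > 0" using le0 posB by linarith
    obtain \<mu> z where mu: "Re \<mu> > 0" and z: "nz m z" and eqz: "\<forall>i<m. mv m B2 z i = \<mu> * mv m A2 z i"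
      using Suc.IH[OF hermB2 posA2 posB2] by blast
    define g where "g = (\<Sum>j<m. A' p (ins p j) * z j)"
    have bma: "b - \<mu> * a \<noteq> 0"
    proof
      assume "b - \<mu> * a = 0"
      then have "(l - \<mu>) * a = 0" using bla by (simp add: algebra_simps)
      then have "l = \<mu>" using a0 by simp
      then show False using mu False by simp
    qed
    define t where "t = \<mu> * g / (b - \<mu> * a)"
    define u where "u = ext p z t"
    have equ: "mv (Suc m) B' u i = \<mu> * mv (Suc m) A' u i" if i: "i < Suc m" for i
    proof (cases "i = p")
      case True
      have "mv (Suc m) B' u i = b * t" unfolding True mv_split[OF p] u_def B'pp
        using B'row ins_less ins_neq by simp
      moreover have "mv (Suc m) A' u i = a * t + g" unfolding True mv_split[OF p] u_def A'pp g_def by simp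
      moreover have "b * t = \<mu> * (a * t + g)" using bma unfolding t_def by (simp add: field_simps)
      ultimately show ?thesis by simp
    next
      case False
      obtain i' where i': "i' < m" "i = ins p i'" using ins_surj[OF i False p] by blast
      have "mv (Suc m) B' u i = mv m B2 z i'"
        unfolding mv_split[OF p] unfolding mv_def u_def B2_def using B'col[OF i False] i' by simp
      moreover have "mv (Suc m) A' u i = mv m A2 z i'"
        unfolding mv_split[OF p] unfolding mv_def u_def A2_def using A'col[OF i False] i' by simp
      ultimately show ?thesis using eqz i' by simp
    qed
    define y where "y = mv (Suc m) Q u"
    have nzu: "nz (Suc m) u"
    proof -
      obtain i where "i < m" "z i \<noteq> 0" using z unfolding nz_def by blast
      then show ?thesis unfolding nz_def u_def by (intro exI[of _ "ins p i"]) (simp add: ins_less)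
    qed
    have nzy: "nz (Suc m) y" unfolding y_def Q_def by (rule Q_inj[where x=x, OF p xp nzu])
    have "adj (Suc m) Q (\<lambda>a. mv (Suc m) B y a - \<mu> * mv (Suc m) A y a) j = 0" if j: "j < Suc m" for j
    proof -
      have "adj (Suc m) Q (\<lambda>a. mv (Suc m) B y a - \<mu> * mv (Suc m) A y a) j
          = adj (Suc m) Q (mv (Suc m) B y) j - \<mu> * adj (Suc m) Q (mv (Suc m) A y) j"
        unfolding adj_def by (simp add: algebra_simps sum_subtractf sum_distrib_left)
      also have "\<dots> = mv (Suc m) B' u j - \<mu> * mv (Suc m) A' u j"
        unfolding A'_def B'_def cong_mv y_def ..
      also have "\<dots> = 0" using equ[OF j] by simp
      finally show ?thesis .
    qed
    then have "\<forall>a<Suc m. mv (Suc m) B y a - \<mu> * mv (Suc m) A y a = 0"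
      using adj_inj[where x=x, OF p xp] unfolding Q_def by blast
    then show ?thesis using mu nzy by (intro exI[of _ \<mu>] exI[of _ y]) auto
  qed
qed

definition idm :: "nat \<Rightarrow> nat \<Rightarrow> complex" where
  "idm i j = (if i = j then 1 else 0)"

lemma qf_add: "qf k (\<lambda>i j. X i j + Y i j) y = qf k X y + qf k Y y"
  unfolding qf_def by (simp add: algebra_simps sum.distrib)

lemma qf_diff: "qf k (\<lambda>i j. X i j - Y i j) y = qf k X y - qf k Y y"
  unfolding qf_def by (simp add: algebra_simps sum_subtractf)

lemma qf_scale: "qf k (\<lambda>i j. c * X i j) y = c * qf k X y"
  unfolding qf_def by (simp add: sum_distrib_left mult_ac)

lemma mv_diff: "mv k (\<lambda>i j. X i j - Y i j) y i = mv k X y i - mv k Y y i"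
  unfolding mv_def by (simp add: algebra_simps sum_subtractf)

lemma mv_scale: "mv k (\<lambda>i j. c * X i j) y i = c * mv k X y i"
  unfolding mv_def by (simp add: sum_distrib_left mult_ac)

lemma mv_id: "i < k \<Longrightarrow> mv k idm y i = y i"
proof -
  assume i: "i < k"
  have "mv k idm y i = (\<Sum>j<k. if i = j then y j else 0)"
    unfolding mv_def idm_def by (intro sum.cong refl) simp
  also have "\<dots> = y i" using i by simp
  finally show ?thesis .
qed

lemma qf_id_re: "Re (qf k idm y) = (\<Sum>i<k. (cmod (y i))^2)"
proof -
  have "qf k idm y = (\<Sum>i<k. cnj (y i) * y i)"
    unfolding qf_mv by (intro sum.cong refl) (simp add: mv_id)
  also have "\<dots> = (\<Sum>i<k. complex_of_real ((cmod (y i))^2))"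
    by (intro sum.cong refl) (metis complex_norm_square mult.commute)
  finally show ?thesis by (simp add: Re_sum)
qed

lemma qf_id_pos: "nz k y \<Longrightarrow> Re (qf k idm y) > 0"
proof -
  assume "nz k y"
  then obtain i where i: "i < k" "y i \<noteq> 0" unfolding nz_def by auto
  have "(\<Sum>j<k. (cmod (y j))^2) \<ge> (cmod (y i))^2"
    using i by (intro member_le_sum) auto
  moreover have "(cmod (y i))^2 > 0" using i by simp
  ultimately show ?thesis unfolding qf_id_re by linarith
qed

lemma herm_idm: "herm k idm" unfolding herm_def idm_def by auto

lemma eig_bound:
  assumes hX: "herm k X"
  and ev: "\<And>e z. nz k z \<Longrightarrow> (\<forall>i<k. mv k X z i = e * z i) \<Longrightarrow> cmod e \<le> r"
  shows "Re (qf k X y) \<le> r * Re (qf k idm y)"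
proof (rule ccontr)
  assume "\<not> ?thesis"
  then have gt: "Re (qf k X y) - r * Re (qf k idm y) > 0" by simp
  define X1 where "X1 i j = X i j - complex_of_real r * idm i j" for i j
  have h1: "herm k X1" unfolding herm_def
  proof (intro allI impI)
    fix i j assume ij: "i < k" "j < k"
    have e: "X i j = cnj (X j i)" using hX ij unfolding herm_def by blast
    show "X1 i j = cnj (X1 j i)" unfolding X1_def idm_def e by simp
  qed
  have "qf k X1 y = qf k X y - complex_of_real r * qf k idm y"
    unfolding X1_def qf_diff qf_scale ..
  then have "Re (qf k X1 y) > 0" using gt by simp
  from pencil[OF h1 _ this] qf_id_pos obtain \<mu> z where
    mu: "Re \<mu> > 0" and z: "nz k z" and eq: "\<forall>i<k. mv k X1 z i = \<mu> * mv k idm z i" by blast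
  have "\<forall>i<k. mv k X z i = (complex_of_real r + \<mu>) * z i"
  proof (intro allI impI)
    fix i assume i: "i < k"
    have "mv k X z i - complex_of_real r * z i = \<mu> * z i"
      using eq[rule_format, OF i] unfolding X1_def mv_diff mv_scale mv_id[OF i] .
    then show "mv k X z i = (complex_of_real r + \<mu>) * z i" by (simp add: algebra_simps)
  qed
  from ev[OF z this] have "cmod (complex_of_real r + \<mu>) \<le> r" .
  moreover have "Re (complex_of_real r + \<mu>) \<le> cmod (complex_of_real r + \<mu>)" by (rule complex_Re_le_cmod)
  ultimately show False using mu by simp
qed

lemma qf_mat_cong: "(\<And>i j. i < k \<Longrightarrow> j < k \<Longrightarrow> X i j = Y i j) \<Longrightarrow> qf k X y = qf k Y y"
  unfolding qf_def by (intro sum.cong refl) auto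

lemma mv_mat_cong: "i < k \<Longrightarrow> (\<And>j. j < k \<Longrightarrow> X i j = Y i j) \<Longrightarrow> mv k X y i = mv k Y y i"
  unfolding mv_def by (intro sum.cong refl) auto

lemma cnj_qf: "cnj (qf k H y) = qf k (\<lambda>i j. cnj (H j i)) y"
proof -
  have "cnj (qf k H y) = (\<Sum>i<k. \<Sum>j<k. y i * cnj (H i j) * cnj (y j))"
    unfolding qf_def by (simp add: mult.assoc)
  also have "\<dots> = (\<Sum>j<k. \<Sum>i<k. y i * cnj (H i j) * cnj (y j))" by (rule sum.swap)
  also have "\<dots> = qf k (\<lambda>i j. cnj (H j i)) y" unfolding qf_def by (simp add: mult_ac)
  finally show ?thesis .
qed

lemma qf_decomp:
  fixes bi :: "nat \<Rightarrow> nat" and X :: "nat \<Rightarrow> nat \<Rightarrow> complex"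
  assumes sym: "\<And>i j. i < k \<Longrightarrow> j < k \<Longrightarrow> X i j = X j i"
  and real: "\<And>i j. cnj (X i j) = X i j"
  shows "qf k X y = qf k (\<lambda>i j. if bi i < bi j then X i j else 0) y
     + cnj (qf k (\<lambda>i j. if bi i < bi j then X i j else 0) y)
     + qf k (\<lambda>i j. if bi i = bi j then X i j else 0) y"
proof -
  have "qf k X y = qf k (\<lambda>i j. ((if bi i < bi j then X i j else 0) +
      cnj (if bi j < bi i then X j i else 0)) + (if bi i = bi j then X i j else 0)) y"
  proof (rule qf_mat_cong)
    fix i j assume ij: "i < k" "j < k"
    show "X i j = ((if bi i < bi j then X i j else 0) +
      cnj (if bi j < bi i then X j i else 0)) + (if bi i = bi j then X i j else 0)"
      using sym[OF ij] real[of j i] by auto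
  qed
  then show ?thesis unfolding qf_add cnj_qf by simp
qed

definition mask :: "(nat \<Rightarrow> nat) \<Rightarrow> nat \<Rightarrow> (nat \<Rightarrow> complex) \<Rightarrow> nat \<Rightarrow> complex" where
  "mask bi s y i = (if bi i = s then y i else 0)"

lemma qf_mask_sum:
  "(\<Sum>s\<in>bi ` {..<k}. qf k X (mask bi s y)) = qf k (\<lambda>i j. if bi i = bi j then X i j else 0) y"
proof -
  have "(\<Sum>s\<in>bi ` {..<k}. qf k X (mask bi s y))
     = (\<Sum>s\<in>bi ` {..<k}. \<Sum>i<k. \<Sum>j<k. if s = bi i then (if bi j = bi i then cnj (y i) * X i j * y j else 0) else 0)"
    unfolding qf_def mask_def by (intro sum.cong refl) auto
  also have "\<dots> = (\<Sum>i<k. \<Sum>s\<in>bi ` {..<k}. \<Sum>j<k. if s = bi i then (if bi j = bi i then cnj (y i) * X i j * y j else 0) else 0)"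
    by (rule sum.swap)
  also have "\<dots> = (\<Sum>i<k. \<Sum>j<k. \<Sum>s\<in>bi ` {..<k}. if s = bi i then (if bi j = bi i then cnj (y i) * X i j * y j else 0) else 0)"
    by (rule sum.cong[OF refl], rule sum.swap)
  also have "\<dots> = (\<Sum>i<k. \<Sum>j<k. if bi j = bi i then cnj (y i) * X i j * y j else 0)"
    by (intro sum.cong refl) (simp add: sum.delta)
  also have "\<dots> = qf k (\<lambda>i j. if bi i = bi j then X i j else 0) y"
    unfolding qf_def by (intro sum.cong refl) auto
  finally show ?thesis .
qed

lemma qf_block_bound:
  fixes bi :: "nat \<Rightarrow> nat"
  assumes bd: "\<And>z. Re (qf k X z) \<le> r * Re (qf k idm z)"
  shows "Re (qf k (\<lambda>i j. if bi i = bi j then X i j else 0) y) \<le> r * Re (qf k idm y)"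
proof -
  have idm_eq: "qf k (\<lambda>i j. if bi i = bi j then idm i j else 0) y = qf k idm y"
    by (rule qf_mat_cong) (auto simp: idm_def)
  have "Re (qf k (\<lambda>i j. if bi i = bi j then X i j else 0) y) = (\<Sum>s\<in>bi ` {..<k}. Re (qf k X (mask bi s y)))"
    unfolding qf_mask_sum[symmetric] by (simp add: Re_sum)
  also have "\<dots> \<le> (\<Sum>s\<in>bi ` {..<k}. r * Re (qf k idm (mask bi s y)))"
    by (intro sum_mono bd)
  also have "\<dots> = r * Re (qf k idm y)"
    unfolding sum_distrib_left[symmetric] Re_sum[symmetric] qf_mask_sum idm_eq ..
  finally show ?thesis .
qed

lemma eig_from_fun:
  assumes Bm: "Bm \<in> carrier_mat n n" and ent: "\<And>i j. i < n \<Longrightarrow> j < n \<Longrightarrow> Bm $$ (i,j) = X i j"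
  and z: "nz n z" and eq: "\<forall>i<n. mv n X z i = e * z i"
  shows "eigenvalue Bm e"
  unfolding eigenvalue_def eigenvector_def
proof (intro exI conjI)
  show "vec n z \<in> carrier_vec (dim_row Bm)" using Bm by auto
  show "vec n z \<noteq> 0\<^sub>v (dim_row Bm)" using z Bm unfolding nz_def by (auto simp: vec_eq_iff)
  show "Bm *\<^sub>v vec n z = e \<cdot>\<^sub>v vec n z"
  proof (rule eq_vecI)
    fix i assume "i < dim_vec (e \<cdot>\<^sub>v vec n z)"
    then have i: "i < n" by simp
    have "(Bm *\<^sub>v vec n z) $ i = (\<Sum>j\<in>{0..<n}. Bm $$ (i,j) * z j)"
      using i Bm by (simp add: scalar_prod_def row_def)
    also have "\<dots> = mv n X z i" unfolding mv_def using ent i by (intro sum.cong) auto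
    finally show "(Bm *\<^sub>v vec n z) $ i = (e \<cdot>\<^sub>v vec n z) $ i" using eq i by simp
  qed (use Bm in auto)
qed


lemma ineq:
  fixes a b r v d :: real
  assumes a: "a > 0" and b: "b > 0" and r: "r > 0" and br: "b * r < 1" and v: "v > 0"
    and dd: "d \<le> r * a" and vv: "v \<le> r * a"
  shows "1/2 + (1 - b * r) / (b * r) \<le> (a + b * (v - d) / 2) / (b * v)"
proof -
  have bv: "b * v > 0" using b v by simp
  have e1: "1/2 + (1 - b * r) / (b * r) = 1 / (b * r) - 1/2" using b r by (simp add: field_simps)
  have "(1 / (b * r) - 1/2) * (b * v) = v / r - b * v / 2" using b r by (simp add: field_simps)
  also have "\<dots> \<le> a + b * (v - d) / 2"
  proof -
    have "v / r \<le> a" using vv r by (simp add: divide_le_eq mult.commute)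
    have "b * d \<le> b * (r * a)" using dd b by (simp add: mult_left_mono)
    have "(a - v / r) * (1 - b * r / 2) \<ge> 0" using \<open>v / r \<le> a\<close> br b r
      by (intro mult_nonneg_nonneg) auto
    moreover have "(a - v / r) * (1 - b * r / 2) = a - v / r - b * r * a / 2 + b * v / 2"
      using r by (simp add: field_simps)
    ultimately have "a - v / r - b * r * a / 2 + b * v / 2 \<ge> 0" by simp
    moreover have "b * (v - d) / 2 = b * v / 2 - b * d / 2" by (simp add: field_simps)
    moreover have "b * (r * a) = b * r * a" by simp
    ultimately show ?thesis using \<open>b * d \<le> b * (r * a)\<close> bv by linarith
  qed
  finally have "(1 / (b * r) - 1/2) * (b * v) \<le> a + b * (v - d) / 2" .
  then have "1 / (b * r) - 1/2 \<le> (a + b * (v - d) / 2) / (b * v)"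
    using bv by (simp add: le_divide_eq)
  then show ?thesis using e1 by simp
qed

lemma real_eig:
  fixes B :: "real mat"
  assumes B: "B \<in> carrier_mat n n"
  and eq: "\<And>i. i < n \<Longrightarrow> (\<Sum>j<n. B $$ (i,j) * r j) = c * r i" and nzr: "\<exists>i<n. r i \<noteq> 0"
  shows "eigenvalue B c"
  unfolding eigenvalue_def eigenvector_def
proof (intro exI conjI)
  show "vec n r \<in> carrier_vec (dim_row B)" using B by auto
  show "vec n r \<noteq> 0\<^sub>v (dim_row B)" using nzr B by (auto simp: vec_eq_iff)
  show "B *\<^sub>v vec n r = c \<cdot>\<^sub>v vec n r"
  proof (rule eq_vecI)
    fix i assume "i < dim_vec (c \<cdot>\<^sub>v vec n r)"
    then have i: "i < n" by simp
    have "(B *\<^sub>v vec n r) $ i = (\<Sum>j\<in>{0..<n}. B $$ (i,j) * r j)"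
      using i B by (simp add: scalar_prod_def row_def)
    also have "\<dots> = c * r i" using eq[OF i] by (simp add: atLeast0LessThan)
    finally show "(B *\<^sub>v vec n r) $ i = (c \<cdot>\<^sub>v vec n r) $ i" using i by simp
  qed (use B in auto)
qed

lemma mat_vec_fun:
  assumes Bm: "Bm \<in> carrier_mat n n" and v: "v \<in> carrier_vec n" and i: "i < n"
  shows "(Bm *\<^sub>v v) $ i = (\<Sum>j<n. Bm $$ (i,j) * v $ j)"
  using Bm v i by (simp add: scalar_prod_def row_def atLeast0LessThan mult.commute)

lemma pos_dir:
  fixes B :: "real mat"
  assumes B: "B \<in> carrier_mat n n" and n: "n > 0"
  and sym: "\<And>i j. i < n \<Longrightarrow> j < n \<Longrightarrow> B $$ (i,j) = B $$ (j,i)"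
  and lm: "lambda_max B > 0"
  shows "\<exists>v. Re (qf n (\<lambda>i j. complex_of_real (B $$ (i,j))) v) > 0"
proof -
  define Bc where "Bc i j = complex_of_real (B $$ (i,j))" for i j
  define Bm where "Bm = map_mat complex_of_real B"
  have Bm: "Bm \<in> carrier_mat n n" using B unfolding Bm_def by auto
  have ent: "Bm $$ (i,j) = Bc i j" if "i < n" "j < n" for i j
    using that B unfolding Bm_def Bc_def by auto
  have hB: "herm n Bc" unfolding herm_def Bc_def using sym by simp
  obtain e where "e \<in> spectrum Bm" using spectrum_non_empty[OF Bm n] by auto
  then obtain zv where zv: "zv \<in> carrier_vec n" "zv \<noteq> 0\<^sub>v n" "Bm *\<^sub>v zv = e \<cdot>\<^sub>v zv"
    unfolding spectrum_def eigenvalue_def eigenvector_def using Bm by auto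
  define z where "z i = zv $ i" for i
  have nzz: "nz n z" using zv(1,2) unfolding nz_def z_def by (auto simp: vec_eq_iff)
  have eqz: "mv n Bc z i = e * z i" if i: "i < n" for i
  proof -
    have "mv n Bc z i = (Bm *\<^sub>v zv) $ i"
      unfolding mat_vec_fun[OF Bm zv(1) i] mv_def z_def using ent i by (intro sum.cong) auto
    also have "\<dots> = e * z i" using zv(3) i zv(1) unfolding z_def by simp
    finally show ?thesis .
  qed
  have "qf n Bc z = e * qf n idm z"
    unfolding qf_mv sum_distrib_left using eqz mv_id by (intro sum.cong refl) (simp add: mult_ac)
  moreover have "Im (qf n Bc z) = 0" by (rule herm_qf_real[OF hB[unfolded herm_def]])
  moreover have "Im (qf n idm z) = 0" by (rule herm_qf_real[OF herm_idm[unfolded herm_def]])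
  moreover have "Re (qf n idm z) > 0" by (rule qf_id_pos[OF nzz])
  ultimately have Ie: "Im e = 0" by simp
  define u where "u i = Re (z i)" for i
  define w where "w i = Im (z i)" for i
  have equ: "(\<Sum>j<n. B $$ (i,j) * u j) = Re e * u i" if i: "i < n" for i
  proof -
    have "(\<Sum>j<n. B $$ (i,j) * u j) = Re (mv n Bc z i)"
      unfolding mv_def Re_sum u_def Bc_def by simp
    then show ?thesis using eqz[OF i] Ie unfolding u_def by simp
  qed
  have eqw: "(\<Sum>j<n. B $$ (i,j) * w j) = Re e * w i" if i: "i < n" for i
  proof -
    have "(\<Sum>j<n. B $$ (i,j) * w j) = Im (mv n Bc z i)"
      unfolding mv_def Im_sum w_def Bc_def by simp
    then show ?thesis using eqz[OF i] Ie unfolding w_def by simp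
  qed
  obtain i0 where i0: "i0 < n" "z i0 \<noteq> 0" using nzz unfolding nz_def by auto
  have "eigenvalue B (Re e)"
  proof (cases "u i0 = 0")
    case False
    then show ?thesis using real_eig[OF B equ] i0 by blast
  next
    case True
    then have "w i0 \<noteq> 0" using i0 unfolding u_def w_def by (simp add: complex_eq_iff)
    then show ?thesis using real_eig[OF B eqw] i0 by blast
  qed
  then have ne: "{x. eigenvalue B x} \<noteq> {}" by auto
  have fin: "finite {x. eigenvalue B x}" using card_finite_spectrum(1)[OF B] unfolding spectrum_def by simp
  have "eigenvalue B (lambda_max B)" using Max_in[OF fin ne] unfolding lambda_max_def by simp
  then obtain vv where vv: "vv \<in> carrier_vec n" "vv \<noteq> 0\<^sub>v n" "B *\<^sub>v vv = lambda_max B \<cdot>\<^sub>v vv"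
    unfolding eigenvalue_def eigenvector_def using B by auto
  define v0 where "v0 i = complex_of_real (vv $ i)" for i
  have mv0: "mv n Bc v0 i = complex_of_real (lambda_max B * vv $ i)" if i: "i < n" for i
  proof -
    have "mv n Bc v0 i = complex_of_real ((B *\<^sub>v vv) $ i)"
      unfolding mat_vec_fun[OF B vv(1) i] mv_def v0_def Bc_def by simp
    then show ?thesis using vv(3) i vv(1) by simp
  qed
  have "qf n Bc v0 = (\<Sum>i<n. complex_of_real (lambda_max B * (vv $ i)^2))"
    unfolding qf_mv using mv0 by (intro sum.cong refl) (simp add: v0_def power2_eq_square)
  then have "Re (qf n Bc v0) = lambda_max B * (\<Sum>i<n. (vv $ i)^2)"
    by (simp add: Re_sum sum_distrib_left)
  moreover have "(\<Sum>i<n. (vv $ i)^2) > 0"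
  proof -
    obtain j where j: "j < n" "vv $ j \<noteq> 0" using vv(1,2) by (auto simp: vec_eq_iff)
    have "(\<Sum>i<n. (vv $ i)^2) \<ge> (vv $ j)^2" using j by (intro member_le_sum) auto
    moreover have "(vv $ j)^2 > 0" using j by simp
    ultimately show ?thesis by linarith
  qed
  ultimately show ?thesis using lm unfolding Bc_def by (intro exI[of _ v0]) simp
qed


lemma comp_mv: "mv n (\<lambda>i j. \<Sum>l<n. P i l * R l j) y i = (\<Sum>l<n. P i l * mv n R y l)"
proof -
  have "mv n (\<lambda>i j. \<Sum>l<n. P i l * R l j) y i = (\<Sum>j<n. \<Sum>l<n. P i l * R l j * y j)"
    unfolding mv_def by (simp add: sum_distrib_right)
  also have "\<dots> = (\<Sum>l<n. \<Sum>j<n. P i l * R l j * y j)" by (rule sum.swap)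
  also have "\<dots> = (\<Sum>l<n. P i l * mv n R y l)" unfolding mv_def by (simp add: sum_distrib_left mult_ac)
  finally show ?thesis .
qed

theorem lemma15:
  fixes ns :: "nat list" and n :: nat and B :: "real mat" and \<beta> :: real
  assumes "ns \<noteq> []" and "\<forall>s\<in>set ns. s > 0" and "n = sum_list ns"
    and "B \<in> carrier_mat n n" and "transpose_mat B = B"
    and "lambda_max B > 0"
    and "0 < \<beta>" and "\<beta> < 1 / rho B"
  shows "\<exists>lam::complex. lam \<noteq> 0 \<and>
     eigenvalue (map_mat complex_of_real
        (\<beta> \<cdot>\<^sub>m (inv_mat (1\<^sub>m n + \<beta> \<cdot>\<^sub>m strict_block_upper ns B) * B))) lam \<and>
     Re (1 / lam) \<ge> 1/2 + (1 - \<beta> * rho B) / (\<beta> * rho B)"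
proof -
  note Bcar = assms(4)
  define bi where "bi = block_idx ns"
  define \<rho> where "\<rho> = rho B"
  have n: "n > 0" using assms(1,2,3) by (cases ns) auto
  have rp: "\<rho> > 0"
  proof (rule ccontr)
    assume "\<not> \<rho> > 0"
    then have "1 / \<rho> \<le> 0" by (simp add: divide_nonpos_nonneg)
    then show False using assms(7,8) unfolding \<rho>_def by linarith
  qed
  have br: "\<beta> * \<rho> < 1" using assms(8) rp unfolding \<rho>_def[symmetric] by (simp add: less_divide_eq)
  have sym: "B $$ (i,j) = B $$ (j,i)" if "i < n" "j < n" for i j
  proof -
    have "B $$ (i,j) = transpose_mat B $$ (i,j)" using assms(5) by simp
    also have "\<dots> = B $$ (j,i)" using that Bcar by simp
    finally show ?thesis .
  qed
  define Bc where "Bc i j = complex_of_real (B $$ (i,j))" for i j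
  define Hc where "Hc i j = (if bi i < bi j then Bc i j else 0)" for i j
  define Dc where "Dc i j = (if bi i = bi j then Bc i j else 0)" for i j
  define Kc where "Kc i j = idm i j + complex_of_real \<beta> * Hc i j" for i j
  define Bb where "Bb i j = complex_of_real \<beta> * Bc i j" for i j
  define Bn where "Bn i j = (-1) * Bc i j" for i j
  have hBc: "herm n Bc" unfolding herm_def Bc_def using sym by simp
  have hBn: "herm n Bn" unfolding herm_def Bn_def Bc_def using sym by simp
  have hBb: "herm n Bb" unfolding herm_def Bb_def Bc_def using sym by simp
  define Bm where "Bm = map_mat complex_of_real B"
  have Bm: "Bm \<in> carrier_mat n n" using Bcar unfolding Bm_def by auto
  have entB: "Bm $$ (i,j) = Bc i j" if "i < n" "j < n" for i j
    using that Bcar unfolding Bm_def Bc_def by auto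
  have evB: "cmod e \<le> \<rho>" if z: "nz n z" and eq: "\<forall>i<n. mv n Bc z i = e * z i" for e z
  proof -
    have "eigenvalue Bm e" by (rule eig_from_fun[OF Bm entB z eq])
    then have "cmod e \<in> norm ` spectrum Bm" unfolding spectrum_def by auto
    from spectral_radius_mem_max(2)[OF Bm n this] show ?thesis
      unfolding \<rho>_def rho_def Bm_def .
  qed
  have upB: "Re (qf n Bc z) \<le> \<rho> * Re (qf n idm z)" for z
    by (rule eig_bound[OF hBc evB])
  have evBn: "cmod e \<le> \<rho>" if z: "nz n z" and eq: "\<forall>i<n. mv n Bn z i = e * z i" for e z
  proof -
    have "\<forall>i<n. mv n Bc z i = (- e) * z i"
    proof (intro allI impI)
      fix i assume "i < n"
      then have "(-1) * mv n Bc z i = e * z i" using eq unfolding Bn_def mv_scale by simp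
      then show "mv n Bc z i = (- e) * z i" by (simp add: algebra_simps) (metis equation_minus_iff)
    qed
    from evB[OF z this] show ?thesis by simp
  qed
  have lowB: "- Re (qf n Bc z) \<le> \<rho> * Re (qf n idm z)" for z
    using eig_bound[OF hBn evBn, where y=z] unfolding Bn_def qf_scale by simp
  have upD: "Re (qf n Dc z) \<le> \<rho> * Re (qf n idm z)" for z
    unfolding Dc_def by (rule qf_block_bound[OF upB])
  have ReH: "2 * Re (qf n Hc z) = Re (qf n Bc z) - Re (qf n Dc z)" for z
  proof -
    have "qf n Bc z = qf n Hc z + cnj (qf n Hc z) + qf n Dc z"
      unfolding Hc_def Dc_def by (rule qf_decomp) (auto simp: Bc_def sym)
    then have "Re (qf n Bc z) = Re (qf n Hc z) + Re (qf n Hc z) + Re (qf n Dc z)"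
      by (metis complex_cnj_cnj cnj.sel(1) plus_complex.sel(1))
    then show ?thesis by simp
  qed
  have qfK: "qf n Kc z = qf n idm z + complex_of_real \<beta> * qf n Hc z" for z
    unfolding Kc_def qf_add qf_scale ..
  have ReK: "Re (qf n Kc z) = Re (qf n idm z) + \<beta> * (Re (qf n Bc z) - Re (qf n Dc z)) / 2" for z
    unfolding qfK using ReH[of z] by simp
  have posK: "\<forall>y. nz n y \<longrightarrow> Re (qf n Kc y) > 0"
  proof (intro allI impI)
    fix y assume y: "nz n y"
    have a: "Re (qf n idm y) > 0" by (rule qf_id_pos[OF y])
    have "Re (qf n Bc y) - Re (qf n Dc y) \<ge> - 2 * (\<rho> * Re (qf n idm y))"
      using lowB[of y] upD[of y] by simp
    then have "\<beta> * (Re (qf n Bc y) - Re (qf n Dc y)) \<ge> \<beta> * (- 2 * (\<rho> * Re (qf n idm y)))"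
      using assms(7) by (intro mult_left_mono) auto
    moreover have "Re (qf n idm y) * (1 - \<beta> * \<rho>) > 0" using a br by simp
    moreover have "\<beta> * (- 2 * (\<rho> * Re (qf n idm y))) = - 2 * (\<beta> * \<rho> * Re (qf n idm y))"
      by (simp add: algebra_simps)
    moreover have "Re (qf n idm y) * (1 - \<beta> * \<rho>) = Re (qf n idm y) - \<beta> * \<rho> * Re (qf n idm y)"
      by (simp add: algebra_simps)
    ultimately show "Re (qf n Kc y) > 0" unfolding ReK by linarith
  qed
  obtain v0 where v0: "Re (qf n Bc v0) > 0"
    using pos_dir[OF Bcar n sym assms(6)] unfolding Bc_def by blast
  have "Re (qf n Bb v0) > 0" unfolding Bb_def qf_scale using v0 assms(7) by simp
  from pencil[OF hBb posK this] obtain \<mu> y where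
    mu: "Re \<mu> > 0" and y: "nz n y" and eqy: "\<forall>i<n. mv n Bb y i = \<mu> * mv n Kc y i" by blast
  have mu0: "\<mu> \<noteq> 0" using mu by auto
  define K where "K = 1\<^sub>m n + \<beta> \<cdot>\<^sub>m strict_block_upper ns B"
  have Kcar: "K \<in> carrier_mat n n" unfolding K_def strict_block_upper_def using Bcar by auto
  have entK: "complex_of_real (K $$ (i,j)) = Kc i j" if "i < n" "j < n" for i j
    using that Bcar unfolding K_def strict_block_upper_def Kc_def idm_def Hc_def Bc_def bi_def
    by simp
  have "det K \<noteq> 0"
  proof
    assume "det K = 0"
    then obtain w where w: "w \<in> carrier_vec n" "w \<noteq> 0\<^sub>v n" "K *\<^sub>v w = 0\<^sub>v n"
      using det_0_iff_vec_prod_zero[OF Kcar] by auto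
    define yw where "yw i = complex_of_real (w $ i)" for i
    have nzw: "nz n yw" using w(1,2) unfolding nz_def yw_def by (auto simp: vec_eq_iff)
    have "mv n Kc yw i = 0" if i: "i < n" for i
    proof -
      have "mv n Kc yw i = complex_of_real ((K *\<^sub>v w) $ i)"
        unfolding mat_vec_fun[OF Kcar w(1) i] mv_def yw_def using entK i
        by (simp add: of_real_sum)
      then show ?thesis using w(3) i by simp
    qed
    then have "qf n Kc yw = 0" unfolding qf_mv by simp
    then show False using posK nzw by fastforce
  qed
  from inv_exists[OF Kcar this] have ex: "\<exists>X. X \<in> carrier_mat n n \<and> K * X = 1\<^sub>m n \<and> X * K = 1\<^sub>m n" by blast
  define Ki where "Ki = inv_mat K"
  have "Ki \<in> carrier_mat n n \<and> K * Ki = 1\<^sub>m n \<and> Ki * K = 1\<^sub>m n"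
    unfolding Ki_def inv_mat_def using Kcar someI_ex[OF ex] by simp
  then have Ki: "Ki \<in> carrier_mat n n" and KiK: "Ki * K = 1\<^sub>m n" by auto
  define Kic where "Kic i j = complex_of_real (Ki $$ (i,j))" for i j
  have KiKe: "(\<Sum>l<n. Kic i l * Kc l j) = idm i j" if "i < n" "j < n" for i j
  proof -
    have "(Ki * K) $$ (i,j) = (\<Sum>l<n. Ki $$ (i,l) * K $$ (l,j))"
      using that Ki Kcar by (simp add: scalar_prod_def atLeast0LessThan)
    then have "(\<Sum>l<n. Ki $$ (i,l) * K $$ (l,j)) = (if i = j then 1 else 0)"
      using KiK that by simp
    then have "complex_of_real (\<Sum>l<n. Ki $$ (i,l) * K $$ (l,j)) = idm i j"
      unfolding idm_def by simp
    moreover have "complex_of_real (\<Sum>l<n. Ki $$ (i,l) * K $$ (l,j)) = (\<Sum>l<n. Kic i l * Kc l j)"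
      unfolding of_real_sum Kic_def using entK that by (intro sum.cong refl) (simp)
    ultimately show ?thesis by simp
  qed
  define M where "M = map_mat complex_of_real (\<beta> \<cdot>\<^sub>m (Ki * B))"
  have Mcar: "M \<in> carrier_mat n n" unfolding M_def using Ki Bcar by auto
  have entM: "M $$ (i,j) = (\<Sum>l<n. Kic i l * Bb l j)" if "i < n" "j < n" for i j
  proof -
    have "(Ki * B) $$ (i,j) = (\<Sum>l<n. Ki $$ (i,l) * B $$ (l,j))"
      using that Ki Bcar by (simp add: scalar_prod_def atLeast0LessThan)
    then show ?thesis unfolding M_def Kic_def Bb_def Bc_def using that Ki Bcar
      by (simp add: of_real_sum sum_distrib_left mult_ac)
  qed
  have eqM: "\<forall>i<n. mv n (\<lambda>i j. M $$ (i,j)) y i = \<mu> * y i"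
  proof (intro allI impI)
    fix i assume i: "i < n"
    have "mv n (\<lambda>i j. M $$ (i,j)) y i = mv n (\<lambda>i j. \<Sum>l<n. Kic i l * Bb l j) y i"
      by (rule mv_mat_cong[OF i]) (simp add: entM i)
    also have "\<dots> = (\<Sum>l<n. Kic i l * mv n Bb y l)" by (rule comp_mv)
    also have "\<dots> = \<mu> * (\<Sum>l<n. Kic i l * mv n Kc y l)"
      unfolding sum_distrib_left using eqy by (intro sum.cong refl) (simp add: mult_ac)
    also have "(\<Sum>l<n. Kic i l * mv n Kc y l) = mv n (\<lambda>i j. \<Sum>l<n. Kic i l * Kc l j) y i"
      by (rule comp_mv[symmetric])
    also have "\<dots> = mv n idm y i"
      by (rule mv_mat_cong[OF i]) (simp add: KiKe i)
    also have "\<dots> = y i" by (rule mv_id[OF i])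
    finally show "mv n (\<lambda>i j. M $$ (i,j)) y i = \<mu> * y i" .
  qed
  have eigM: "eigenvalue M \<mu>" by (rule eig_from_fun[OF Mcar _ y eqM]) simp
  define V where "V = qf n Bc y"
  define \<kappa> where "\<kappa> = qf n Kc y"
  define a where "a = Re (qf n idm y)"
  define dd where "dd = Re (qf n Dc y)"
  define vr where "vr = Re V"
  have "qf n Bb y = \<mu> * \<kappa>"
    unfolding qf_mv \<kappa>_def sum_distrib_left using eqy by (intro sum.cong refl) (simp add: mult_ac)
  moreover have "qf n Bb y = complex_of_real \<beta> * V" unfolding Bb_def qf_scale V_def ..
  moreover have "Im V = 0" unfolding V_def by (rule herm_qf_real[OF hBc[unfolded herm_def]])
  then have "V = complex_of_real vr" unfolding vr_def by (simp add: complex_eq_iff)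
  ultimately have muk: "\<mu> * \<kappa> = complex_of_real (\<beta> * vr)" by simp
  have Rk: "Re \<kappa> > 0" unfolding \<kappa>_def using posK y by blast
  have Rk2: "Re \<kappa> = a + \<beta> * (vr - dd) / 2" unfolding \<kappa>_def ReK a_def dd_def vr_def V_def ..
  have kdiv: "\<kappa> = complex_of_real (\<beta> * vr) / \<mu>" using muk mu0 by (simp add: field_simps)
  have "Re \<kappa> * ((Re \<mu>)^2 + (Im \<mu>)^2) = \<beta> * vr * Re \<mu>"
  proof -
    have "(Re \<mu>)^2 + (Im \<mu>)^2 > 0" using mu by (simp add: add_pos_nonneg)
    moreover have "Re \<kappa> = \<beta> * vr * Re \<mu> / ((Re \<mu>)^2 + (Im \<mu>)^2)"
      unfolding kdiv by (simp add: Re_divide)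
    ultimately show ?thesis by simp
  qed
  moreover have "Re \<kappa> * ((Re \<mu>)^2 + (Im \<mu>)^2) > 0" using Rk mu by (simp add: add_pos_nonneg)
  ultimately have "\<beta> * vr * Re \<mu> > 0" by simp
  then have "\<beta> * vr > 0" using mu by (simp add: zero_less_mult_iff)
  then have vr: "vr > 0" using assms(7) by (simp add: zero_less_mult_iff)
  have inv: "1 / \<mu> = \<kappa> / complex_of_real (\<beta> * vr)"
    using muk mu0 vr assms(7) by (simp add: field_simps)
  have "Re (1 / \<mu>) = (a + \<beta> * (vr - dd) / 2) / (\<beta> * vr)"
    unfolding inv Re_divide_of_real Rk2 ..
  moreover have "1/2 + (1 - \<beta> * \<rho>) / (\<beta> * \<rho>) \<le> (a + \<beta> * (vr - dd) / 2) / (\<beta> * vr)"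
  proof (rule ineq)
    show "a > 0" unfolding a_def by (rule qf_id_pos[OF y])
    show "dd \<le> \<rho> * a" unfolding dd_def a_def by (rule upD)
    show "vr \<le> \<rho> * a" unfolding vr_def a_def V_def by (rule upB)
  qed (use assms(7) rp br vr in auto)
  ultimately have bound: "Re (1 / \<mu>) \<ge> 1/2 + (1 - \<beta> * rho B) / (\<beta> * rho B)"
    unfolding \<rho>_def by simp
  have eigM': "eigenvalue (map_mat complex_of_real
        (\<beta> \<cdot>\<^sub>m (inv_mat (1\<^sub>m n + \<beta> \<cdot>\<^sub>m strict_block_upper ns B) * B))) \<mu>"
    using eigM unfolding M_def Ki_def K_def .
  show ?thesis
    by (rule exI[of _ \<mu>]) (use mu0 eigM' bound in simp)
qed

end
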